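(* Let $(M,\cdot,1)$ be a monoid, $\Sigma$ a finite alphabet, and $\ell:\Sigma^*\to M$ an $M$-language. If there exists a factorization $(g,f)$ on $L$ such that the set $\{S^{(g,f)}_\alpha(\ell)\mid\alpha\in\Sigma^*\}$ is finite, then $\ell$ is a recognizable $M$-language.
   Context: $L$ is the set of all functions $\Sigma^*\to M$ ($M$-languages); $\varepsilon$ is the empty word. For $m\in M$, $\ell\in L$, $m\cdot\ell$ is $\gamma\mapsto m\cdot\ell(\gamma)$. A factorization on $L$ is a pair $(g,f)$ of functions $g:L\to M$, $f:L\to L$ with $g(\ell)\cdot f(\ell)=\ell$ for all $\ell\in L$. For a word $\alpha$, $\Delta_\alpha:L\to L$ is $\Delta_\alpha(\ell)(\gamma)=\ell(\alpha\gamma)$. Define $S^{(g,f)}_\varepsilon$ as the identity on $L$ and $S^{(g,f)}_{\alpha\sigma}=f\circ\Delta_\sigma\circ S^{(g,f)}_\alpha$ for $\alpha\in\Sigma^*$, $\sigma\in\Sigma$. An $M$-DFA is a tuple $A=(Q,\Sigma,u,i_u,\delta,w,\rho)$ with $Q$ finite nonempty, $u\in Q$, $i_u\in M$, $\delta:Q\times\Sigma\to Q$, $w:Q\times\Sigma\to M$, $\rho:Q\to M$. Write $q\alpha$ for the extension of $\delta$ to words ($q\varepsilon=q$, $q(\alpha\sigma)=\delta(q\alpha,\sigma)$), and let $w^*(q,\varepsilon)=1$, $w^*(q,\alpha\sigma)=w^*(q,\alpha)\cdot w(q\alpha,\sigma)$. $A$ recognizes the $M$-language $\alpha\mapsto i_u\cdot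 w^*(u,\alpha)\cdot\rho(u\alpha)$. An $M$-language is recognizable if some $M$-DFA recognizes it. *)

theory Defs
  imports Main
begin

text \<open>M-languages: functions from words (lists over the alphabet 's) to the monoid 'm.
  The empty word is the empty list; \<alpha>\<sigma> (appending a letter) is \<alpha> @ [\<sigma>].\<close>

type_synonym ('s, 'm) mlang = "'s list \<Rightarrow> 'm"

definition scal :: "'m::monoid_mult \<Rightarrow> ('s, 'm) mlang \<Rightarrow> ('s, 'm) mlang" where
  "scal m l = (\<lambda>\<gamma>. m * l \<gamma>)"

definition is_factorization ::
  "(('s, 'm::monoid_mult) mlang \<Rightarrow> 'm) \<Rightarrow> (('s, 'm) mlang \<Rightarrow> ('s, 'm) mlang) \<Rightarrow> bool" where
  "is_factorization g f \<longleftrightarrow> (\<forall>l. scal (g l) (f l) = l)"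

definition Delta :: "'s list \<Rightarrow> ('s, 'm) mlang \<Rightarrow> ('s, 'm) mlang" where
  "Delta \<alpha> l = (\<lambda>\<gamma>. l (\<alpha> @ \<gamma>))"

text \<open>S_\<epsilon> = id and S_{\<alpha>\<sigma>} = f \<circ> \<Delta>_\<sigma> \<circ> S_\<alpha> (recursion on the last letter, via foldl).\<close>
definition S_fac :: "(('s, 'm) mlang \<Rightarrow> ('s, 'm) mlang) \<Rightarrow> 's list \<Rightarrow> ('s, 'm) mlang \<Rightarrow> ('s, 'm) mlang" where
  "S_fac f \<alpha> = foldl (\<lambda>h \<sigma>. f \<circ> Delta [\<sigma>] \<circ> h) id \<alpha>"

lemma S_fac_Nil: "S_fac f [] = id"
  by (simp add: S_fac_def)

lemma S_fac_snoc: "S_fac f (\<alpha> @ [\<sigma>]) = f \<circ> Delta [\<sigma>] \<circ> S_fac f \<alpha>"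
  by (simp add: S_fac_def)

definition is_MDFA :: "nat set \<Rightarrow> nat \<Rightarrow> (nat \<Rightarrow> 's \<Rightarrow> nat) \<Rightarrow> bool" where
  "is_MDFA Q u \<delta> \<longleftrightarrow> finite Q \<and> Q \<noteq> {} \<and> u \<in> Q \<and> (\<forall>q\<in>Q. \<forall>\<sigma>. \<delta> q \<sigma> \<in> Q)"

definition delta_star :: "(nat \<Rightarrow> 's \<Rightarrow> nat) \<Rightarrow> nat \<Rightarrow> 's list \<Rightarrow> nat" where
  "delta_star \<delta> q \<alpha> = foldl \<delta> q \<alpha>"

fun w_star :: "(nat \<Rightarrow> 's \<Rightarrow> nat) \<Rightarrow> (nat \<Rightarrow> 's \<Rightarrow> 'm::monoid_mult) \<Rightarrow> nat \<Rightarrow> 's list \<Rightarrow> 'm" where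
  "w_star \<delta> w q [] = 1"
| "w_star \<delta> w q (\<sigma> # \<alpha>) = w q \<sigma> * w_star \<delta> w (\<delta> q \<sigma>) \<alpha>"

lemma w_star_snoc: "w_star \<delta> w q (\<alpha> @ [\<sigma>]) = w_star \<delta> w q \<alpha> * w (delta_star \<delta> q \<alpha>) \<sigma>"
  by (induction \<alpha> arbitrary: q) (simp_all add: delta_star_def mult.assoc)

definition recognizes ::
  "nat set \<Rightarrow> nat \<Rightarrow> 'm::monoid_mult \<Rightarrow> (nat \<Rightarrow> 's \<Rightarrow> nat) \<Rightarrow> (nat \<Rightarrow> 's \<Rightarrow> 'm) \<Rightarrow> (nat \<Rightarrow> 'm)
     \<Rightarrow> ('s, 'm) mlang \<Rightarrow> bool" where
  "recognizes Q u i\<^sub>u \<delta> w \<rho> l \<longleftrightarrow> is_MDFA Q u \<delta> \<and>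
     (\<forall>\<alpha>. l \<alpha> = i\<^sub>u * w_star \<delta> w u \<alpha> * \<rho> (delta_star \<delta> u \<alpha>))"

definition recognizable :: "('s, 'm::monoid_mult) mlang \<Rightarrow> bool" where
  "recognizable l \<longleftrightarrow> (\<exists>Q u i\<^sub>u \<delta> w \<rho>. recognizes Q u i\<^sub>u \<delta> w \<rho> l)"

end

theory Submission
  imports Defs
begin

theorem lemma3:
  fixes l :: "'s::finite list \<Rightarrow> 'm::monoid_mult"
  assumes "\<exists>g f. is_factorization g f \<and> finite {S_fac f \<alpha> l | \<alpha>. True}"
  shows "recognizable l"
proof -
  obtain g f where fac: "is_factorization g f" and fin: "finite {S_fac f \<alpha> l | \<alpha>. True}"
    using assms by blast
  define X where "X = {S_fac f \<alpha> l | \<alpha>. True}"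
  have finX: "finite X" using fin X_def by simp
  have lX: "l \<in> X" unfolding X_def by (rule CollectI, rule exI[of _ "[]"], simp add: S_fac_Nil)
  obtain e where e: "bij_betw e {..<card X} X"
    using ex_bij_betw_nat_finite[OF finX] lessThan_atLeast0 by metis
  define n where "n = card X"
  define idx where "idx = inv_into {..<n} e"
  have idx_in: "idx x \<in> {..<n}" if "x \<in> X" for x
    using e that unfolding idx_def n_def by (metis bij_betw_def inv_into_into)
  have e_idx: "e (idx x) = x" if "x \<in> X" for x
    using e that unfolding idx_def n_def by (meson bij_betw_inv_into_right)
  have eX: "e q \<in> X" if "q < n" for q
    using e that unfolding n_def by (auto simp: bij_betw_def)
  have closed: "f (Delta [\<sigma>] x) \<in> X" if "x \<in> X" for x \<sigma>
  proof -
    from that obtain \<alpha> where "x = S_fac f \<alpha> l" unfolding X_def by blast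
    then have "f (Delta [\<sigma>] x) = S_fac f (\<alpha> @ [\<sigma>]) l" by (simp add: S_fac_snoc)
    then show ?thesis unfolding X_def by blast
  qed
  define \<delta> where "\<delta> = (\<lambda>q \<sigma>. idx (f (Delta [\<sigma>] (e q))))"
  define w where "w = (\<lambda>q \<sigma>. g (Delta [\<sigma>] (e q)))"
  define \<rho> where "\<rho> = (\<lambda>q. e q [])"
  define u where "u = idx l"
  have mdfa: "is_MDFA {..<n} u \<delta>"
    unfolding is_MDFA_def u_def \<delta>_def
    using idx_in[OF lX] idx_in closed eX by auto
  have inv: "e (delta_star \<delta> u \<alpha>) = S_fac f \<alpha> l \<and>
      (\<forall>\<gamma>. l (\<alpha> @ \<gamma>) = w_star \<delta> w u \<alpha> * S_fac f \<alpha> l \<gamma>)" for \<alpha>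
  proof (induction \<alpha> rule: rev_induct)
    case Nil
    then show ?case by (simp add: delta_star_def u_def e_idx[OF lX] S_fac_Nil)
  next
    case (snoc \<sigma> \<alpha>)
    define q where "q = delta_star \<delta> u \<alpha>"
    have eq: "e q = S_fac f \<alpha> l" using snoc q_def by simp
    have inXa: "S_fac f \<alpha> l \<in> X" unfolding X_def by blast
    have S1: "S_fac f (\<alpha> @ [\<sigma>]) l = f (Delta [\<sigma>] (e q))" by (simp add: S_fac_snoc eq)
    have ds: "delta_star \<delta> u (\<alpha> @ [\<sigma>]) = \<delta> q \<sigma>" by (simp add: delta_star_def q_def)
    have A: "e (delta_star \<delta> u (\<alpha> @ [\<sigma>])) = S_fac f (\<alpha> @ [\<sigma>]) l"
      using ds S1 e_idx closed[OF inXa] eq \<delta>_def by simp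
    have facD: "Delta [\<sigma>] (e q) \<gamma> = g (Delta [\<sigma>] (e q)) * f (Delta [\<sigma>] (e q)) \<gamma>" for \<gamma>
      using fac unfolding is_factorization_def scal_def by metis
    have B: "l ((\<alpha> @ [\<sigma>]) @ \<gamma>) = w_star \<delta> w u (\<alpha> @ [\<sigma>]) * S_fac f (\<alpha> @ [\<sigma>]) l \<gamma>" for \<gamma>
    proof -
      have "l ((\<alpha> @ [\<sigma>]) @ \<gamma>) = l (\<alpha> @ (\<sigma> # \<gamma>))" by simp
      also have "\<dots> = w_star \<delta> w u \<alpha> * e q (\<sigma> # \<gamma>)" using snoc eq by simp
      also have "e q (\<sigma> # \<gamma>) = Delta [\<sigma>] (e q) \<gamma>" by (simp add: Delta_def)
      also have "\<dots> = w q \<sigma> * S_fac f (\<alpha> @ [\<sigma>]) l \<gamma>" using facD S1 w_def by simp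
      finally show ?thesis by (simp add: w_star_snoc q_def mult.assoc)
    qed
    show ?case using A B by blast
  qed
  have "recognizes {..<n} u 1 \<delta> w \<rho> l"
    unfolding recognizes_def
  proof (intro conjI allI)
    show "is_MDFA {..<n} u \<delta>" by (rule mdfa)
    fix \<alpha>
    show "l \<alpha> = 1 * w_star \<delta> w u \<alpha> * \<rho> (delta_star \<delta> u \<alpha>)"
      using inv[of \<alpha>] \<rho>_def by (metis append_Nil2 mult_1_left)
  qed
  then show ?thesis unfolding recognizable_def by blast
qed

end
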